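(* Let $\Phi$ be of type $A_n$. The map sending a face $F$ of $\mathcal P$ to its cone $\{tx\mid t\ge0,x\in F\}$ is a (natural) bijection between the nonempty proper faces of $\mathcal P$ and the faces of the hyperplane arrangement $\mathcal H$ other than $\{0\}$. Under this bijection, the $k$-dimensional faces of $\mathcal P$ correspond to the $(k+1)$-dimensional faces of $\mathcal H$, for all $k=0,\dots,n-1$.
   Context: $\Phi$ is the root system of type $A_n$ in $E=\operatorname{span}_{\mathbb R}\Phi$, $\mathcal P=\operatorname{conv}(\Phi)$, and $\mathcal H$ is the central arrangement of the linear hyperplanes $\operatorname{span}_{\mathbb R}F$, $F$ a face of $\mathcal P$ of dimension $n-2$. A region of $\mathcal H$ is a connected component of the complement of the union of its hyperplanes; the intersection poset $\mathcal L(\mathcal H)$ is the set of nonempty intersections of hyperplanes of $\mathcal H$ (including $E$); a face of $\mathcal H$ is a nonempty set $\overline R\cap x$ with $R$ a region and $x\in\mathcal L(\mathcal H)$. *)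

theory Defs
  imports "HOL-Analysis.Analysis"
begin

text \<open>Root system of type A_n realised in real^'n with CARD('n) = n + 1:
  the vectors e_i - e_j for i \<noteq> j.\<close>
definition rootsA :: "(real^'n::finite) set" where
  "rootsA = {axis i 1 - axis j 1 | i j. i \<noteq> j}"

definition ambientA :: "(real^'n::finite) set" where
  "ambientA = span rootsA"

definition polytopeA :: "(real^'n::finite) set" where
  "polytopeA = convex hull rootsA"

text \<open>The arrangement H: linear spans of the faces of P of dimension n - 2,
  where n = CARD('n) - 1.\<close>
definition arrA :: "(real^'n::finite) set set" where
  "arrA = {span F | F. F face_of polytopeA \<and> aff_dim F = int CARD('n) - 3}"

definition arr_regions :: "'a::real_normed_vector set \<Rightarrow> 'a set set \<Rightarrow> 'a set set" where
  "arr_regions E H = components (E - \<Union>H)"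

definition arr_intersections :: "'a set \<Rightarrow> 'a set set \<Rightarrow> 'a set set" where
  "arr_intersections E H = {X. \<exists>S. S \<subseteq> H \<and> X = E \<inter> \<Inter>S \<and> X \<noteq> {}}"

definition arr_faces :: "'a::real_normed_vector set \<Rightarrow> 'a set set \<Rightarrow> 'a set set" where
  "arr_faces E H = {closure R \<inter> X | R X. R \<in> arr_regions E H \<and>
      X \<in> arr_intersections E H \<and> closure R \<inter> X \<noteq> {}}"

definition cone_over :: "'a::real_vector set \<Rightarrow> 'a set" where
  "cone_over F = {t *\<^sub>R x | t x. t \<ge> 0 \<and> x \<in> F}"

end

theory Submission
  imports Defs
begin

definition rt :: "'n::finite \<Rightarrow> 'n \<Rightarrow> real^'n" where
  "rt i j = axis i 1 - axis j 1"

definition RS :: "'n::finite set \<Rightarrow> 'n set \<Rightarrow> (real^'n) set" where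
  "RS I J = {rt i j | i j. i \<in> I \<and> j \<in> J}"

definition VV :: "'n::finite set \<Rightarrow> (real^'n) set" where
  "VV K = {x. sum (\<lambda>k. x$k) UNIV = 0 \<and> (\<forall>k. k \<notin> K \<longrightarrow> x$k = 0)}"

definition CC :: "'n::finite set \<Rightarrow> 'n set \<Rightarrow> (real^'n) set" where
  "CC I J = {x \<in> VV (I \<union> J). (\<forall>i\<in>I. 0 \<le> x$i) \<and> (\<forall>j\<in>J. x$j \<le> 0)}"

lemma axis_comp: "(axis i (1::real) :: real^'n::finite) $ k = (if k = i then 1 else 0)"
  by (simp add: axis_def)

lemma rt_comp: "rt i j $ k = (if k = i then 1 else 0) - (if k = j then (1::real) else 0)"
  by (simp add: rt_def axis_comp)

lemma sum_axis_comp: "(\<Sum>k\<in>UNIV. (axis i (1::real) :: real^'n::finite) $ k) = 1"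
  by (simp add: axis_comp)

lemma sum_rt: "(\<Sum>k\<in>UNIV. rt i j $ k) = 0"
  by (simp add: rt_def sum_subtractf axis_comp)

lemma expand:
  fixes x :: "real^'n::finite"
  assumes "\<forall>k. k \<notin> K \<longrightarrow> x$k = 0"
  shows "x = (\<Sum>k\<in>K. x$k *\<^sub>R axis k 1)"
proof -
  have "(\<Sum>k\<in>K. x$k *\<^sub>R axis k 1) $ m = (\<Sum>k\<in>K. if m = k then x$k else 0)" for m
    by (simp only: sum_component vector_scaleR_component) (intro sum.cong refl, simp add: axis_comp)
  also have "\<dots> m = x $ m" for m
    using assms by (simp add: sum.delta')
  finally show ?thesis by (simp add: vec_eq_iff)
qed

lemma subspace_VV: "subspace (VV K)"
  unfolding subspace_def VV_def
  by (simp add: sum.distrib sum_distrib_left[symmetric])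

lemma rt_in_VV: "i \<in> K \<Longrightarrow> j \<in> K \<Longrightarrow> rt i j \<in> VV K"
proof -
  assume a: "i \<in> K" "j \<in> K"
  have "sum (\<lambda>k. rt i j $ k) UNIV = 0" by (rule sum_rt)
  moreover have "\<forall>k. k \<notin> K \<longrightarrow> rt i j $ k = 0" using a by (auto simp: rt_comp)
  ultimately show ?thesis by (simp add: VV_def)
qed

lemma span_RS:
  assumes "I \<inter> J = {}" "I \<noteq> {}" "J \<noteq> {}"
  shows "span (RS I J) = VV (I \<union> J)"
proof
  show "span (RS I J) \<subseteq> VV (I \<union> J)"
    by (rule span_minimal[OF _ subspace_VV]) (auto simp: RS_def intro!: rt_in_VV)
next
  obtain i0 j0 where ij: "i0 \<in> I" "j0 \<in> J" using assms by blast
  show "VV (I \<union> J) \<subseteq> span (RS I J)"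
  proof
    fix x assume x: "x \<in> VV (I \<union> J)"
    let ?K = "I \<union> J"
    have z: "\<forall>k. k \<notin> ?K \<longrightarrow> x$k = 0" and s: "sum (\<lambda>k. x$k) UNIV = 0" using x by (auto simp: VV_def)
    have sK: "sum (\<lambda>k. x$k) ?K = 0"
      using s z by (metis (mono_tags, lifting) DiffD2 UNIV_I subset_UNIV sum.mono_neutral_cong_left finite)
    have "x = (\<Sum>k\<in>?K. x$k *\<^sub>R axis k 1)" by (rule expand[OF z])
    also have "\<dots> = (\<Sum>k\<in>?K. x$k *\<^sub>R axis k 1) - (\<Sum>k\<in>?K. x$k) *\<^sub>R axis j0 1"
      using sK by simp
    also have "\<dots> = (\<Sum>k\<in>?K. x$k *\<^sub>R rt k j0)"
      by (simp add: rt_def scaleR_diff_right sum_subtractf scaleR_sum_left)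
    finally have xe: "x = (\<Sum>k\<in>?K. x$k *\<^sub>R rt k j0)" .
    have "rt k j0 \<in> span (RS I J)" if kK: "k \<in> ?K" for k
    proof -
      consider "k \<in> I" | "k = j0" | "k \<in> J" "k \<noteq> j0" using kK by blast
      then show ?thesis
      proof cases
        case 1 then show ?thesis using ij by (auto simp: RS_def intro!: span_base)
      next
        case 2 then show ?thesis by (simp add: rt_def span_zero)
      next
        case 3
        have "rt k j0 = rt i0 j0 - rt i0 k" by (simp add: rt_def)
        moreover have "rt i0 j0 \<in> RS I J" "rt i0 k \<in> RS I J" using ij 3 by (auto simp: RS_def)
        ultimately show ?thesis by (metis span_base span_diff)
      qed
    qed
    then show "x \<in> span (RS I J)" by (subst xe) (auto intro!: span_sum span_scale)
  qed
qed

lemma convex_CC: "convex (CC I J)"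
  unfolding convex_def CC_def VV_def
  by (auto simp: sum.distrib sum_distrib_left[symmetric] intro!: add_nonpos_nonpos mult_nonneg_nonpos)

lemma scale_CC: "x \<in> CC I J \<Longrightarrow> 0 \<le> t \<Longrightarrow> t *\<^sub>R x \<in> CC I J"
  unfolding CC_def VV_def
  by (auto simp: sum_distrib_left[symmetric] intro!: mult_nonneg_nonpos)

lemma RS_CC: "I \<inter> J = {} \<Longrightarrow> RS I J \<subseteq> CC I J"
  unfolding RS_def CC_def
  by (auto intro!: rt_in_VV simp: rt_comp)

lemma double_sum:
  fixes u v :: "'a \<Rightarrow> 'b::real_vector"
  assumes "finite I" "finite J"
  shows "(\<Sum>i\<in>I. \<Sum>j\<in>J. (a i * b j) *\<^sub>R (u i - v j))
       = (\<Sum>j\<in>J. b j) *\<^sub>R (\<Sum>i\<in>I. a i *\<^sub>R u i) - (\<Sum>i\<in>I. a i) *\<^sub>R (\<Sum>j\<in>J. b j *\<^sub>R v j)"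
proof -
  have 1: "(\<Sum>i\<in>I. \<Sum>j\<in>J. (a i * b j) *\<^sub>R u i) = (\<Sum>j\<in>J. b j) *\<^sub>R (\<Sum>i\<in>I. a i *\<^sub>R u i)"
    by (simp add: scaleR_sum_right scaleR_sum_left[symmetric] sum_distrib_left mult.commute)
  have 2: "(\<Sum>i\<in>I. \<Sum>j\<in>J. (a i * b j) *\<^sub>R v j) = (\<Sum>i\<in>I. a i) *\<^sub>R (\<Sum>j\<in>J. b j *\<^sub>R v j)"
    by (subst sum.swap) (simp add: scaleR_sum_right scaleR_sum_left[symmetric] sum_distrib_left mult.commute)
  show ?thesis
    by (simp add: scaleR_diff_right sum_subtractf 1[symmetric] 2[symmetric])
qed

lemma sumK:
  fixes x :: "real^'n::finite"
  assumes "x \<in> VV K"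
  shows "sum (\<lambda>k. x$k) K = 0"
proof -
  have "sum (\<lambda>k. x$k) K = sum (\<lambda>k. x$k) UNIV"
    using assms by (intro sum.mono_neutral_left) (auto simp: VV_def)
  then show ?thesis using assms by (simp add: VV_def)
qed

lemma cone_FF:
  fixes I J :: "'n::finite set"
  assumes d: "I \<inter> J = {}" and ne: "I \<noteq> {}" "J \<noteq> {}"
  shows "cone_over (convex hull RS I J) = CC I J"
proof
  have "convex hull RS I J \<subseteq> CC I J"
    using RS_CC[OF d] convex_CC[of I J] by (rule hull_minimal)
  then show "cone_over (convex hull RS I J) \<subseteq> CC I J"
    unfolding cone_over_def using scale_CC by blast
next
  show "CC I J \<subseteq> cone_over (convex hull RS I J)"
  proof
    fix x assume x: "x \<in> CC I J"
    have xV: "x \<in> VV (I \<union> J)" and xI: "\<forall>i\<in>I. 0 \<le> x$i" and xJ: "\<forall>j\<in>J. x$j \<le> 0"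
      using x by (auto simp: CC_def)
    have z: "\<forall>k. k \<notin> I \<union> J \<longrightarrow> x$k = 0" using xV by (simp add: VV_def)
    define s where "s = sum (\<lambda>i. x$i) I"
    have sJ: "sum (\<lambda>j. - x$j) J = s"
      using sumK[OF xV] d by (simp add: s_def sum.union_disjoint sum_negf)
    obtain i0 j0 where ij0: "i0 \<in> I" "j0 \<in> J" using ne by blast
    have r0: "rt i0 j0 \<in> convex hull RS I J"
      using ij0 by (auto simp: RS_def intro!: hull_inc)
    show "x \<in> cone_over (convex hull RS I J)"
    proof (cases "s = 0")
      case True
      then have "\<forall>i\<in>I. x$i = 0" using xI by (simp add: s_def sum_nonneg_eq_0_iff)
      moreover have "\<forall>j\<in>J. - x$j = 0" using True sJ xJ by (simp add: sum_nonneg_eq_0_iff)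
      ultimately have "x = 0" using z by (auto simp: vec_eq_iff)
      then have "x = 0 *\<^sub>R rt i0 j0" by simp
      then show ?thesis using r0 unfolding cone_over_def by blast
    next
      case False
      have "s \<ge> 0" using xI by (simp add: s_def sum_nonneg)
      with False have sp: "s > 0" by simp
      define c where "c = (\<lambda>(i,j). (x$i * - x$j) / s^2)"
      have csum: "(\<Sum>p\<in>I\<times>J. c p) = 1"
      proof -
        have "(\<Sum>p\<in>I\<times>J. c p) = (\<Sum>i\<in>I. \<Sum>j\<in>J. (x$i * - x$j) / s^2)"
          by (simp add: c_def sum.cartesian_product)
        also have "\<dots> = (\<Sum>i\<in>I. \<Sum>j\<in>J. x$i * - x$j) / s^2"
          by (simp only: sum_divide_distrib)
        also have "\<dots> = (\<Sum>i\<in>I. x$i) * (\<Sum>j\<in>J. - x$j) / s^2"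
          by (simp only: sum_product)
        also have "\<dots> = 1" using sJ sp by (simp add: s_def power2_eq_square)
        finally show ?thesis .
      qed
      have cnn: "\<And>p. p \<in> I\<times>J \<Longrightarrow> 0 \<le> c p"
        using xI xJ by (auto simp: c_def intro!: divide_nonpos_nonneg mult_nonneg_nonpos)
      have mem: "(\<Sum>p\<in>I\<times>J. c p *\<^sub>R (case p of (i,j) \<Rightarrow> rt i j)) \<in> convex hull RS I J"
        by (rule convex_sum[OF _ convex_convex_hull csum cnn])
           (auto simp: RS_def intro!: hull_inc)
      have "(\<Sum>p\<in>I\<times>J. c p *\<^sub>R (case p of (i,j) \<Rightarrow> rt i j))
          = (\<Sum>i\<in>I. \<Sum>j\<in>J. ((x$i) * (- x$j) / s^2) *\<^sub>R (axis i 1 - axis j 1))"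
        by (simp add: sum.cartesian_product) (intro sum.cong refl, auto simp: c_def rt_def)
      also have "\<dots> = (1 / s^2) *\<^sub>R (\<Sum>i\<in>I. \<Sum>j\<in>J. ((x$i) * (- x$j)) *\<^sub>R (axis i 1 - axis j 1))"
        by (simp add: scaleR_sum_right)
      also have "\<dots> = (1 / s^2) *\<^sub>R ((\<Sum>j\<in>J. - x$j) *\<^sub>R (\<Sum>i\<in>I. x$i *\<^sub>R axis i 1)
                       - (\<Sum>i\<in>I. x$i) *\<^sub>R (\<Sum>j\<in>J. (- x$j) *\<^sub>R axis j 1))"
        by (subst double_sum) auto
      also have "\<dots> = (1 / s) *\<^sub>R ((\<Sum>i\<in>I. x$i *\<^sub>R axis i 1) + (\<Sum>j\<in>J. x$j *\<^sub>R axis j 1))"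
        using sp sJ by (simp add: s_def power2_eq_square sum_negf scaleR_diff_right scaleR_add_right)
      also have "\<dots> = (1 / s) *\<^sub>R x"
        using expand[OF z] d by (simp add: sum.union_disjoint)
      finally have "(1/s) *\<^sub>R x \<in> convex hull RS I J" using mem by simp
      moreover have "x = s *\<^sub>R ((1/s) *\<^sub>R x)" using sp by simp
      ultimately show ?thesis unfolding cone_over_def using sp
        by (metis (mono_tags, lifting) less_le mem_Collect_eq)
    qed
  qed
qed

lemma rootsA_rt: "(rootsA :: (real^'n::finite) set) = {rt i j | i j. i \<noteq> j}"
  by (simp add: rootsA_def rt_def)

lemma finite_rootsA: "finite (rootsA :: (real^'n::finite) set)"
proof -
  have "(rootsA :: (real^'n) set) \<subseteq> (\<lambda>(i,j). rt i j) ` UNIV"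
    by (auto simp: rootsA_rt)
  then show ?thesis by (rule finite_subset) simp
qed

lemma face_hull_eq:
  fixes S :: "'a::euclidean_space set"
  assumes "finite S" "T face_of convex hull S"
  shows "T = convex hull (S \<inter> T)"
proof -
  obtain S' where S': "S' \<subseteq> S" "T = convex hull S'"
    by (rule face_of_convex_hull_subset[OF finite_imp_compact[OF assms(1)] assms(2)])
  have "S' \<subseteq> convex hull S'" by (rule hull_subset)
  then have "S' \<subseteq> S \<inter> T" using S' by auto
  then have "convex hull S' \<subseteq> convex hull (S \<inter> T)" by (rule hull_mono)
  then have "T \<subseteq> convex hull (S \<inter> T)" using S' by simp
  moreover have "convex hull (S \<inter> T) \<subseteq> T"
    using face_of_imp_convex[OF assms(2)] by (intro hull_minimal) auto
  ultimately show ?thesis by blast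
qed

lemma inner_rt: "a \<bullet> rt i j = a$i - a$j"
  by (simp add: rt_def inner_diff_right inner_axis)

lemma rt_mem: "i \<noteq> j \<Longrightarrow> rt i j \<in> rootsA"
  by (auto simp: rootsA_rt)

lemma RS_sub_roots: "I \<inter> J = {} \<Longrightarrow> RS I J \<subseteq> rootsA"
  by (auto simp: RS_def intro!: rt_mem)

lemma face_FF:
  fixes I J :: "'n::finite set"
  assumes d: "I \<inter> J = {}" and ne: "I \<noteq> {}" "J \<noteq> {}"
  shows "convex hull RS I J face_of polytopeA \<and> convex hull RS I J \<noteq> {} \<and> convex hull RS I J \<noteq> polytopeA"
proof -
  define a :: "real^'n" where "a = (\<chi> k. if k \<in> I then 1 else if k \<in> J then -1 else 0)"
  have ai: "a$k = (if k \<in> I then 1 else if k \<in> J then -1 else 0)" for k by (simp add: a_def)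
  have le: "a \<bullet> r \<le> 2" if "r \<in> rootsA" for r
    using that by (auto simp: rootsA_rt inner_rt ai)
  have P: "polytopeA \<subseteq> {x. a \<bullet> x \<le> 2}"
    unfolding polytopeA_def using le by (intro hull_minimal) (auto simp: convex_halfspace_le)
  define T where "T = polytopeA \<inter> {x. a \<bullet> x = 2}"
  have Tf: "T face_of polytopeA"
    unfolding T_def using P
    by (intro face_of_Int_supporting_hyperplane_le) (auto simp: polytopeA_def)
  have "T = convex hull (rootsA \<inter> T)"
    using face_hull_eq[OF finite_rootsA] Tf unfolding polytopeA_def by blast
  moreover have "rootsA \<inter> T = RS I J"
  proof
    show "rootsA \<inter> T \<subseteq> RS I J"
    proof
      fix r assume r: "r \<in> rootsA \<inter> T"
      then obtain i j where "r = rt i j" "i \<noteq> j" by (auto simp: rootsA_rt)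
      moreover have "a \<bullet> r = 2" using r by (simp add: T_def)
      ultimately have "i \<in> I" "j \<in> J" by (auto simp: inner_rt ai split: if_splits)
      then show "r \<in> RS I J" using \<open>r = rt i j\<close> by (auto simp: RS_def)
    qed
  next
    show "RS I J \<subseteq> rootsA \<inter> T"
    proof
      fix r assume r: "r \<in> RS I J"
      then obtain i j where ij: "r = rt i j" "i \<in> I" "j \<in> J" by (auto simp: RS_def)
      have "r \<in> rootsA" using RS_sub_roots[OF d] r by blast
      moreover have "a \<bullet> r = 2" using ij d by (auto simp: inner_rt ai)
      ultimately show "r \<in> rootsA \<inter> T"
        by (auto simp: T_def polytopeA_def intro: hull_inc)
    qed
  qed
  ultimately have TE: "T = convex hull RS I J" by simp
  obtain i j where ij: "i \<in> I" "j \<in> J" using ne by blast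
  have "rt i j \<in> RS I J" using ij by (auto simp: RS_def)
  then have ne2: "convex hull RS I J \<noteq> {}" by (auto dest: hull_inc)
  have "rt j i \<in> polytopeA" using ij d by (auto simp: polytopeA_def intro!: hull_inc rt_mem)
  moreover have "rt j i \<notin> T" using ij d by (auto simp: T_def inner_rt ai)
  ultimately have "convex hull RS I J \<noteq> polytopeA" using TE by blast
  then show ?thesis using Tf TE ne2 by simp
qed

lemma face_char:
  fixes F :: "(real^'n::finite) set"
  assumes F: "F face_of polytopeA" "F \<noteq> {}" "F \<noteq> polytopeA"
  shows "\<exists>I J. I \<inter> J = {} \<and> I \<noteq> {} \<and> J \<noteq> {} \<and> F = convex hull RS I J"
proof -
  have "polyhedron (polytopeA :: (real^'n) set)"
    unfolding polytopeA_def by (intro polytope_imp_polyhedron polytope_convex_hull finite_rootsA)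
  then have "F exposed_face_of polytopeA" using F(1) exposed_face_of_polyhedron by blast
  then obtain a b where ab: "polytopeA \<subseteq> {x. a \<bullet> x \<le> b}" "F = polytopeA \<inter> {x. a \<bullet> x = b}"
    unfolding exposed_face_of_def by blast
  have FE: "F = convex hull (rootsA \<inter> F)"
    using face_hull_eq[OF finite_rootsA] F(1) unfolding polytopeA_def by blast
  have inP: "r \<in> polytopeA" if "r \<in> rootsA" for r using that by (simp add: polytopeA_def hull_inc)
  have inF: "rt i j \<in> F \<longleftrightarrow> a$i - a$j = b" if "i \<noteq> j" for i j
    using that ab(2) inP by (auto simp: inner_rt rootsA_rt)
  have leb: "a$i - a$j \<le> b" if "i \<noteq> j" for i j
    using that ab(1) inP[OF rt_mem[OF that]] by (auto simp: inner_rt)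
  have "rootsA \<inter> F \<noteq> {}" using FE F(2) by auto
  then obtain i0 j0 where ij0: "i0 \<noteq> j0" "rt i0 j0 \<in> F" by (auto simp: rootsA_rt)
  define M where "M = Max (range (\<lambda>k. a$k))"
  define m where "m = Min (range (\<lambda>k. a$k))"
  have Mge: "a$k \<le> M" for k by (simp add: M_def)
  have mle: "m \<le> a$k" for k by (simp add: m_def)
  have "M \<in> range (\<lambda>k. a$k)" unfolding M_def by (rule Max_in) auto
  then obtain iM where iM: "a$iM = M" by auto
  have "m \<in> range (\<lambda>k. a$k)" unfolding m_def by (rule Min_in) auto
  then obtain jm where jm: "a$jm = m" by auto
  have mM: "m < M"
  proof (rule ccontr)
    assume "\<not> m < M"
    then have eq: "a$k = a$l" for k l using Mge mle by (metis antisym not_less order_trans)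
    have "b = 0" using inF[OF ij0(1)] ij0(2) eq[of i0 j0] by simp
    then have "rootsA \<subseteq> F" using inF eq by (auto simp: rootsA_rt)
    then have "polytopeA \<subseteq> F" unfolding polytopeA_def
      using face_of_imp_convex[OF F(1)] by (intro hull_minimal) auto
    then show False using F(3) face_of_imp_subset[OF F(1)] by blast
  qed
  have "iM \<noteq> jm" using iM jm mM by auto
  have bv: "b = M - m"
  proof (rule antisym)
    show "b \<le> M - m" using inF[OF ij0(1)] ij0(2) Mge[of i0] mle[of j0] by simp
    show "M - m \<le> b" using leb[OF \<open>iM \<noteq> jm\<close>] iM jm by simp
  qed
  define I where "I = {k. a$k = M}"
  define J where "J = {k. a$k = m}"
  have d: "I \<inter> J = {}" using mM by (auto simp: I_def J_def)
  have ne: "I \<noteq> {}" "J \<noteq> {}" using iM jm by (auto simp: I_def J_def)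
  have "rootsA \<inter> F = RS I J"
  proof
    show "rootsA \<inter> F \<subseteq> RS I J"
    proof
      fix r assume r: "r \<in> rootsA \<inter> F"
      then obtain i j where ij: "r = rt i j" "i \<noteq> j" by (auto simp: rootsA_rt)
      then have "a$i - a$j = M - m" using r inF bv by auto
      then have "a$i = M" "a$j = m" using Mge[of i] mle[of j] by linarith+
      then show "r \<in> RS I J" using ij by (auto simp: RS_def I_def J_def)
    qed
  next
    show "RS I J \<subseteq> rootsA \<inter> F"
    proof
      fix r assume r: "r \<in> RS I J"
      then obtain i j where ij: "r = rt i j" "i \<in> I" "j \<in> J" by (auto simp: RS_def)
      then have "i \<noteq> j" using d by auto
      then show "r \<in> rootsA \<inter> F" using ij inF bv by (auto simp: rootsA_rt I_def J_def)
    qed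
  qed
  then show ?thesis using FE d ne by auto
qed

lemma dim_W: "dim {x::real^'n::finite. \<forall>k. k \<notin> K \<longrightarrow> x$k = 0} = card K"
proof -
  have "vec.dim {x::real^'n. \<forall>k. k \<notin> K \<longrightarrow> x$k = 0} = card K" by (rule dim_substandard_cart)
  then show ?thesis by (simp add: dim_vec_eq)
qed

lemma dim_VV:
  fixes K :: "'n::finite set"
  assumes "k0 \<in> K"
  shows "dim (VV K :: (real^'n) set) = card K - 1"
proof -
  define W :: "(real^'n) set" where "W = {x. \<forall>k. k \<notin> K \<longrightarrow> x$k = 0}"
  define e :: "real^'n" where "e = axis k0 1"
  have sW: "subspace W" unfolding W_def subspace_def by auto
  have eW: "e \<in> W" using assms by (auto simp: W_def e_def axis_comp)
  have VW: "VV K \<subseteq> W" by (auto simp: VV_def W_def)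
  have "span (insert e (VV K)) = W"
  proof
    show "span (insert e (VV K)) \<subseteq> W" using sW eW VW by (intro span_minimal) auto
  next
    show "W \<subseteq> span (insert e (VV K))"
    proof
      fix x assume x: "x \<in> W"
      define s where "s = sum (\<lambda>k. x$k) UNIV"
      have "x - s *\<^sub>R e \<in> VV K"
        using x assms by (auto simp: VV_def W_def e_def s_def sum_subtractf axis_comp sum_distrib_left[symmetric])
      then have "x - s *\<^sub>R e \<in> span (insert e (VV K))" by (simp add: span_base)
      moreover have "s *\<^sub>R e \<in> span (insert e (VV K))" by (simp add: span_base span_scale)
      ultimately have "(x - s *\<^sub>R e) + s *\<^sub>R e \<in> span (insert e (VV K))" by (rule span_add)
      then show "x \<in> span (insert e (VV K))" by simp
    qed
  qed
  then have "dim (span (insert e (VV K))) = card K" using dim_W[of K] unfolding W_def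
    by simp
  then have "dim (insert e (VV K)) = card K" by (simp only: dim_span)
  moreover have "span (VV K) = VV K" using subspace_VV[of K] by (simp only: span_eq_iff)
  moreover have "e \<notin> VV K"
  proof -
    have "(\<Sum>k\<in>UNIV. e$k) = 1" unfolding e_def by (rule sum_axis_comp)
    then show ?thesis by (simp add: VV_def)
  qed
  ultimately
  show ?thesis by (simp add: dim_insert)
qed

lemma aff_dim_span_eq: "aff_dim (span S :: (real^'n::finite) set) = int (dim S)"
  by (simp add: aff_dim_subspace)

lemma dimK:
  fixes I J :: "'n::finite set"
  assumes d: "I \<inter> J = {}" and ne: "I \<noteq> {}" "J \<noteq> {}"
  shows "int (dim (VV (I \<union> J) :: (real^'n) set)) = int (card (I \<union> J)) - 1"
proof -
  obtain k0 where k0: "k0 \<in> I \<union> J" using ne by blast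
  have "card (I \<union> J) \<ge> 1" using k0 by (metis card_0_eq empty_iff finite less_one not_le)
  moreover have "dim (VV (I \<union> J) :: (real^'n) set) = card (I \<union> J) - 1" by (rule dim_VV[OF k0])
  ultimately show ?thesis by simp
qed

lemma aff_dim_FF:
  fixes I J :: "'n::finite set"
  assumes d: "I \<inter> J = {}" and ne: "I \<noteq> {}" "J \<noteq> {}"
  shows "aff_dim (convex hull RS I J) = int (card (I \<union> J)) - 2"
proof -
  define a :: "real^'n" where "a = (\<chi> k. if k \<in> I then 1 else 0)"
  have "RS I J \<subseteq> {x. a \<bullet> x = 1}" using d by (auto simp: RS_def inner_rt a_def)
  then have "affine hull RS I J \<subseteq> {x. a \<bullet> x = 1}"
    by (intro hull_minimal) (auto simp: affine_hyperplane)
  then have n0: "0 \<notin> affine hull RS I J" by auto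
  have "affine hull (insert 0 (RS I J)) = span (RS I J)"
    using affine_hull_insert_span_gen[of 0 "RS I J"] by simp
  then have "aff_dim (insert 0 (RS I J)) = int (dim (RS I J))"
    by (metis aff_dim_affine_hull aff_dim_span_eq)
  also have "\<dots> = int (card (I \<union> J)) - 1"
    using dimK[OF assms] span_RS[OF assms] by (metis dim_span)
  finally show ?thesis using n0 aff_dim_insert[of 0 "RS I J"] by (simp add: aff_dim_convex_hull)
qed

lemma aff_dim_CC:
  fixes I J :: "'n::finite set"
  assumes d: "I \<inter> J = {}" and ne: "I \<noteq> {}" "J \<noteq> {}"
  shows "aff_dim (CC I J) = int (card (I \<union> J)) - 1"
proof -
  have 0: "0 \<in> CC I J" by (simp add: CC_def VV_def)
  have "span (CC I J) = VV (I \<union> J)"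
  proof
    show "span (CC I J) \<subseteq> VV (I \<union> J)"
      by (intro span_minimal subspace_VV) (auto simp: CC_def)
    show "VV (I \<union> J) \<subseteq> span (CC I J)"
      using span_RS[OF assms] span_mono[OF RS_CC[OF d]] by simp
  qed
  moreover have "affine hull (CC I J) = span (CC I J)"
    using 0 by (intro affine_hull_span_0 hull_inc)
  ultimately have "aff_dim (CC I J) = int (dim (VV (I \<union> J)))"
    by (metis aff_dim_affine_hull aff_dim_span_eq dim_span)
  also have "\<dots> = int (card (I \<union> J)) - 1"
    by (rule dimK[OF assms])
  finally show ?thesis .
qed

lemma span_conv: "span (convex hull S) = span (S :: 'a::real_vector set)"
proof
  show "span (convex hull S) \<subseteq> span S"
    by (intro span_minimal hull_minimal) (auto simp: span_superset subspace_imp_convex)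
  show "span S \<subseteq> span (convex hull S)" by (intro span_mono hull_subset)
qed

lemma VV_two:
  assumes "CARD('n::finite) = 2"
  shows "VV (- {a::'n}) = {0 :: real^'n}"
proof -
  obtain b where b: "- {a} = {b}"
  proof -
    have "card (- {a}) = 1" using assms by (simp add: Compl_eq_Diff_UNIV card_Diff_subset)
    then obtain b where "- {a} = {b}" by (rule card_1_singletonE)
    then show ?thesis by (rule that)
  qed
  then have ab: "b \<noteq> a" by auto
  have U: "(UNIV :: 'n set) = {a, b}" using b by auto
  show ?thesis
  proof
    show "VV (- {a}) \<subseteq> {0}"
    proof
      fix x :: "real^'n" assume x: "x \<in> VV (- {a})"
      then have "x$a = 0" "sum (\<lambda>k. x$k) UNIV = 0" by (auto simp: VV_def)
      then have "x$b = 0" "x$a = 0" using ab by (simp_all add: U)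
      then have "x$k = 0" for k using U by (cases "k = a") auto
      then show "x \<in> {0}" by (simp add: vec_eq_iff)
    qed
    show "{0} \<subseteq> VV (- {a})" by (simp add: VV_def)
  qed
qed

lemma card_compl_one:
  fixes K :: "'n::finite set"
  assumes "card K = CARD('n) - 1" "CARD('n) \<ge> 1"
  obtains a where "K = - {a}"
proof -
  have "card (- K) = 1" using assms
    by (simp add: Compl_eq_Diff_UNIV card_Diff_subset)
  then obtain a where "- K = {a}" by (rule card_1_singletonE)
  then have "K = - {a}" by (metis double_compl)
  then show ?thesis using that by blast
qed

lemma aff_dim_P:
  fixes k0 :: "'n::finite"
  assumes "CARD('n) \<ge> 2"
  shows "aff_dim (polytopeA :: (real^'n) set) \<ge> int CARD('n) - 2"
proof -
  have ne: "- {k0} \<noteq> {}"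
  proof
    assume "- {k0} = {}"
    then have "(UNIV :: 'n set) = {k0}" by auto
    then have "CARD('n) = card {k0}" by simp
    then show False using assms by simp
  qed
  have d: "{k0} \<inter> - {k0} = {}" by auto
  have "convex hull RS {k0} (- {k0}) \<subseteq> polytopeA"
    using RS_sub_roots[OF d] by (simp add: polytopeA_def hull_mono)
  then have "aff_dim (convex hull RS {k0} (- {k0})) \<le> aff_dim (polytopeA :: (real^'n) set)"
    by (rule aff_dim_subset)
  moreover have "aff_dim (convex hull RS {k0} (- {k0})) = int (card ({k0} \<union> - {k0})) - 2"
    by (rule aff_dim_FF[OF d _ ne]) simp
  ultimately show ?thesis by simp
qed

lemma arrA_eq:
  assumes N: "CARD('n::finite) \<ge> 2"
  shows "(arrA :: (real^'n) set set) = range (\<lambda>a. VV (- {a}))"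
proof
  show "(arrA :: (real^'n) set set) \<subseteq> range (\<lambda>a. VV (- {a}))"
  proof
    fix X :: "(real^'n) set" assume "X \<in> arrA"
    then obtain F where F: "X = span F" "F face_of polytopeA" "aff_dim F = int CARD('n) - 3"
      unfolding arrA_def by blast
    show "X \<in> range (\<lambda>a. VV (- {a}))"
    proof (cases "F = {}")
      case True
      then have "CARD('n) = 2" using F(3) by simp
      then have "X = VV (- {undefined})" using F(1) True VV_two[OF \<open>CARD('n) = 2\<close>] by simp
      then show ?thesis by (rule range_eqI)
    next
      case False
      have "F \<noteq> polytopeA"
      proof
        assume "F = polytopeA"
        then show False using F(3) aff_dim_P[OF N] by simp
      qed
      then obtain I J where IJ: "I \<inter> J = {}" "I \<noteq> {}" "J \<noteq> {}" "F = convex hull RS I J"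
        using face_char[OF F(2) False] by blast
      then have "int (card (I \<union> J)) - 2 = int CARD('n) - 3" using F(3) aff_dim_FF[OF IJ(1-3)] by simp
      then have c1: "card (I \<union> J) = CARD('n) - 1" using N by linarith
      have c2: "CARD('n) \<ge> 1" using N by simp
      obtain a where a: "I \<union> J = - {a}" using card_compl_one[OF c1 c2] by blast
      have "X = span (convex hull RS I J)" using F(1) IJ(4) by simp
      also have "\<dots> = VV (I \<union> J)" by (simp only: span_conv span_RS[OF IJ(1-3)])
      finally have "X = VV (- {a})" using a by simp
      then show ?thesis by (rule range_eqI)
    qed
  qed
next
  show "range (\<lambda>a. VV (- {a})) \<subseteq> (arrA :: (real^'n) set set)"
  proof
    fix X assume "X \<in> range (\<lambda>a. VV (- {a::'n}))"
    then obtain a where a: "X = VV (- {a})" by blast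
    show "X \<in> arrA"
    proof (cases "CARD('n) = 2")
      case True
      then have "X = span {}" using a VV_two[OF True] by simp
      moreover have "aff_dim ({} :: (real^'n) set) = int CARD('n) - 3" using True by simp
      ultimately show ?thesis unfolding arrA_def by blast
    next
      case False
      then have N3: "CARD('n) \<ge> 3" using N by simp
      have "card (- {a}) = CARD('n) - 1" by (simp add: Compl_eq_Diff_UNIV card_Diff_subset)
      then have "card (- {a}) \<ge> 2" using N3 by simp
      then have "- {a} \<noteq> {}" by auto
      then obtain b where b: "b \<in> - {a}" by blast
      have "card (- {a} - {b}) \<ge> 1" using \<open>card (- {a}) \<ge> 2\<close> b by (simp add: card_Diff_singleton)
      then have ne: "- {a} - {b} \<noteq> {}" by (metis card.empty not_one_le_zero)
      define I where "I = {b}"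
      define J where "J = - {a} - {b}"
      have IJ: "I \<inter> J = {}" "I \<noteq> {}" "J \<noteq> {}" using ne by (auto simp: I_def J_def)
      have U: "I \<union> J = - {a}" using b by (auto simp: I_def J_def)
      have "convex hull RS I J face_of polytopeA" using face_FF[OF IJ] by blast
      moreover have "aff_dim (convex hull RS I J) = int CARD('n) - 3"
        using aff_dim_FF[OF IJ] U \<open>card (- {a}) = CARD('n) - 1\<close> N by simp
      moreover have "X = span (convex hull RS I J)" using a U by (simp add: span_conv span_RS[OF IJ])
      ultimately show ?thesis unfolding arrA_def by blast
    qed
  qed
qed

definition Opn :: "('n::finite \<Rightarrow> bool) \<Rightarrow> (real^'n) set" where
  "Opn \<sigma> = {x. sum (\<lambda>k. x$k) UNIV = 0 \<and> (\<forall>a. if \<sigma> a then x$a > 0 else x$a < 0)}"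

definition Ocl :: "('n::finite \<Rightarrow> bool) \<Rightarrow> (real^'n) set" where
  "Ocl \<sigma> = {x. sum (\<lambda>k. x$k) UNIV = 0 \<and> (\<forall>a. if \<sigma> a then x$a \<ge> 0 else x$a \<le> 0)}"

lemma VV_UNIV: "VV UNIV = {x::real^'n::finite. sum (\<lambda>k. x$k) UNIV = 0}"
  by (simp add: VV_def)

lemma ambient_eq:
  assumes N: "CARD('n::finite) \<ge> 2"
  shows "(ambientA :: (real^'n) set) = VV UNIV"
proof
  show "(ambientA :: (real^'n) set) \<subseteq> VV UNIV"
    unfolding ambientA_def by (intro span_minimal subspace_VV) (auto simp: rootsA_rt intro!: rt_in_VV)
next
  obtain k0 :: 'n where True by blast
  have ne: "- {k0} \<noteq> {}"
  proof
    assume "- {k0} = {}"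
    then have "(UNIV :: 'n set) = {k0}" by auto
    then have "CARD('n) = card {k0}" by simp
    then show False using N by simp
  qed
  have d: "{k0} \<inter> - {k0} = {}" by auto
  have "VV UNIV = VV ({k0} \<union> - {k0})" by simp
  also have "\<dots> = span (RS {k0} (- {k0}))" using span_RS[OF d _ ne] by simp
  also have "\<dots> \<subseteq> ambientA" unfolding ambientA_def using RS_sub_roots[OF d] by (rule span_mono)
  finally show "VV UNIV \<subseteq> (ambientA :: (real^'n) set)" .
qed

lemma Union_arr:
  assumes N: "CARD('n::finite) \<ge> 2"
  shows "(ambientA :: (real^'n) set) - \<Union>arrA = {x. sum (\<lambda>k. x$k) UNIV = 0 \<and> (\<forall>a. x$a \<noteq> 0)}"
proof -
  have "x \<in> (ambientA :: (real^'n) set) - \<Union>arrA \<longleftrightarrow> x \<in> VV UNIV \<and> (\<forall>a. x \<notin> VV (- {a}))" for x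
    unfolding ambient_eq[OF N] arrA_eq[OF N] by blast
  then show ?thesis by (auto simp: VV_def)
qed

lemma convex_Opn: fixes \<sigma> :: "'n::finite \<Rightarrow> bool" shows "convex (Opn \<sigma>)"
  unfolding convex_def Opn_def
proof (intro allI impI ballI, clarify, intro conjI allI)
  fix x y :: "real^'n" and u v :: real and a
  assume x: "sum (($) x) UNIV = 0" "\<forall>a. if \<sigma> a then 0 < x $ a else x $ a < 0"
    and y: "sum (($) y) UNIV = 0" "\<forall>a. if \<sigma> a then 0 < y $ a else y $ a < 0"
    and uv: "0 \<le> u" "0 \<le> v" "u + v = 1"
  show "sum (($) (u *\<^sub>R x + v *\<^sub>R y)) UNIV = 0"
    using x y by (simp add: sum.distrib sum_distrib_left[symmetric])
  have "u > 0 \<or> v > 0" using uv by linarith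
  show "if \<sigma> a then 0 < (u *\<^sub>R x + v *\<^sub>R y) $ a else (u *\<^sub>R x + v *\<^sub>R y) $ a < 0"
  proof (cases "\<sigma> a")
    case True
    then have "0 < x$a" "0 < y$a" using x(2) y(2) by metis+
    then show ?thesis using True uv \<open>u > 0 \<or> v > 0\<close>
      by (auto intro: add_pos_nonneg add_nonneg_pos mult_pos_pos)
  next
    case False
    then have "x$a < 0" "y$a < 0" using x(2) y(2) by metis+
    then have "u * x$a + v * y$a < 0" using uv \<open>u > 0 \<or> v > 0\<close>
      by (smt (verit) mult_nonneg_nonpos mult_pos_neg)
    then show ?thesis using False by simp
  qed
qed

lemma comp_sub:
  fixes d :: "(real^'n::finite) set"
  assumes d: "connected d" "d \<subseteq> {x. sum (\<lambda>k. x$k) UNIV = 0 \<and> (\<forall>a. x$a \<noteq> 0)}" "x \<in> d"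
  shows "d \<subseteq> Opn (\<lambda>a. x$a > 0)"
proof
  fix y assume y: "y \<in> d"
  have yU: "sum (\<lambda>k. y$k) UNIV = 0" "\<forall>a. y$a \<noteq> 0" using d(2) y by auto
  have xU: "\<forall>a. x$a \<noteq> 0" using d(2,3) by auto
  have "if x$a > 0 then y$a > 0 else y$a < 0" for a
  proof (rule ccontr)
    assume c: "\<not> (if x$a > 0 then y$a > 0 else y$a < 0)"
    have "\<exists>z\<in>d. z$a = 0"
    proof (cases "x$a > 0")
      case True
      then have "y$a \<le> 0" using c by simp
      then show ?thesis using connected_ivt_component_cart[OF d(1) y d(3), of a 0] True by simp
    next
      case False
      then have "y$a \<ge> 0" "x$a \<le> 0" using c by auto
      then show ?thesis using connected_ivt_component_cart[OF d(1) d(3) y, of a 0] by simp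
    qed
    then show False using d(2) by auto
  qed
  then show "y \<in> Opn (\<lambda>a. x$a > 0)" using yU by (simp add: Opn_def)
qed

lemma regions_char:
  assumes N: "CARD('n::finite) \<ge> 2"
  shows "R \<in> arr_regions (ambientA :: (real^'n) set) arrA \<longleftrightarrow> (\<exists>\<sigma>. R = Opn \<sigma> \<and> Opn \<sigma> \<noteq> {})"
proof -
  define U :: "(real^'n) set" where "U = {x. sum (\<lambda>k. x$k) UNIV = 0 \<and> (\<forall>a. x$a \<noteq> 0)}"
  have RU: "arr_regions (ambientA :: (real^'n) set) arrA = components U"
    unfolding arr_regions_def U_def using Union_arr[OF N] by simp
  have OU: "Opn \<sigma> \<subseteq> U" for \<sigma>
  proof
    fix x assume x: "x \<in> Opn \<sigma>"
    have xa: "if \<sigma> a then x$a > 0 else x$a < 0" for a using x by (simp add: Opn_def)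
    have "x$a \<noteq> 0" for a using xa[of a] by (cases "\<sigma> a") auto
    then show "x \<in> U" using x by (simp add: Opn_def U_def)
  qed
  have key: "connected_component_set U x = Opn (\<lambda>a. x$a > 0)" if x: "x \<in> U" for x
  proof
    show "connected_component_set U x \<subseteq> Opn (\<lambda>a. x$a > 0)"
      using comp_sub[of "connected_component_set U x" x] x connected_component_subset[of U x]
      unfolding U_def by (simp add: connected_component_refl_eq)
    have "x$a \<noteq> 0" for a using x by (simp add: U_def)
    then have "x$a < 0" if "\<not> x$a > 0" for a using that by (meson linorder_neqE_linordered_idom)
    then have "x \<in> Opn (\<lambda>a. x$a > 0)" using x by (auto simp: Opn_def U_def)
    then show "Opn (\<lambda>a. x$a > 0) \<subseteq> connected_component_set U x"
      using OU by (intro connected_component_maximal convex_connected convex_Opn) auto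
  qed
  show ?thesis
  proof
    assume "R \<in> arr_regions ambientA arrA"
    then obtain x where x: "x \<in> U" "R = connected_component_set U x"
      unfolding RU components_iff by blast
    then have "R = Opn (\<lambda>a. x$a > 0)" using key by simp
    moreover have "x \<in> R" using x by simp
    ultimately show "\<exists>\<sigma>. R = Opn \<sigma> \<and> Opn \<sigma> \<noteq> {}" by blast
  next
    assume "\<exists>\<sigma>. R = Opn \<sigma> \<and> Opn \<sigma> \<noteq> {}"
    then obtain \<sigma> x where s: "R = Opn \<sigma>" "x \<in> Opn \<sigma>" by blast
    then have "\<sigma> = (\<lambda>a. x$a > 0)" by (auto simp: Opn_def fun_eq_iff split: if_splits)
    moreover have "x \<in> U" using s OU by blast
    ultimately have "R = connected_component_set U x" using key s by simp
    then show "R \<in> arr_regions ambientA arrA" unfolding RU components_iff using \<open>x \<in> U\<close> by blast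
  qed
qed

lemma closed_Ocl: fixes \<sigma> :: "'n::finite \<Rightarrow> bool" shows "closed (Ocl \<sigma>)"
proof -
  have "Ocl \<sigma> = {x. (\<chi> k. 1) \<bullet> x = (0::real)} \<inter> (\<Inter>a. if \<sigma> a then {x. x$a \<ge> 0} else {x. x$a \<le> 0})"
    by (auto simp: Ocl_def inner_vec_def split: if_splits)
  moreover have "closed {x::real^'n. (\<chi> k. 1) \<bullet> x = (0::real)}" by (rule closed_hyperplane)
  moreover have "closed (\<Inter>a. if \<sigma> a then {x::real^'n. x$a \<ge> 0} else {x. x$a \<le> 0})"
    by (intro closed_INT) (simp add: closed_halfspace_component_le_cart closed_halfspace_component_ge_cart)
  ultimately show ?thesis by (simp add: closed_Int)
qed

lemma closure_Opn:
  assumes ne: "Opn \<sigma> \<noteq> {}"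
  shows "closure (Opn \<sigma>) = Ocl \<sigma>"
proof
  have "Opn \<sigma> \<subseteq> Ocl \<sigma>"
  proof
    fix x assume x: "x \<in> Opn \<sigma>"
    have xa: "if \<sigma> a then x$a > 0 else x$a < 0" for a using x by (simp add: Opn_def)
    have "if \<sigma> a then x$a \<ge> 0 else x$a \<le> 0" for a using xa[of a] by (cases "\<sigma> a") auto
    then show "x \<in> Ocl \<sigma>" using x by (simp add: Opn_def Ocl_def)
  qed
  then show "closure (Opn \<sigma>) \<subseteq> Ocl \<sigma>" using closed_Ocl by (rule closure_minimal)
next
  obtain x0 where x0: "x0 \<in> Opn \<sigma>" using ne by blast
  show "Ocl \<sigma> \<subseteq> closure (Opn \<sigma>)"
  proof
    fix y assume y: "y \<in> Ocl \<sigma>"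
    define f where "f = (\<lambda>n. y + inverse (real (Suc n)) *\<^sub>R (x0 - y))"
    have "f n \<in> Opn \<sigma>" for n
    proof -
      define t where "t = inverse (real (Suc n))"
      have t: "0 < t" "t \<le> 1" by (auto simp: t_def inverse_le_1_iff)
      have fa: "f n $ a = (1 - t) * y$a + t * x0$a" for a by (simp add: f_def t_def algebra_simps)
      have "sum (\<lambda>k. f n $ k) UNIV = (1 - t) * sum (\<lambda>k. y$k) UNIV + t * sum (\<lambda>k. x0$k) UNIV"
        by (simp add: fa sum.distrib sum_distrib_left)
      also have "\<dots> = 0" using x0 y by (simp add: Opn_def Ocl_def)
      finally have s: "sum (\<lambda>k. f n $ k) UNIV = 0" .
      have "if \<sigma> a then f n $ a > 0 else f n $ a < 0" for a
      proof (cases "\<sigma> a")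
        case True
        then have "y$a \<ge> 0" "x0$a > 0" using x0 y by (auto simp: Opn_def Ocl_def split: if_splits)
        then show ?thesis using True t by (simp add: fa add_nonneg_pos)
      next
        case False
        then have "y$a \<le> 0" "x0$a < 0" using x0 y by (auto simp: Opn_def Ocl_def split: if_splits)
        then have "(1 - t) * y$a \<le> 0" "t * x0$a < 0" using t by (auto simp: mult_nonneg_nonpos mult_pos_neg)
        then show ?thesis using False by (simp add: fa)
      qed
      then show ?thesis using s by (simp add: Opn_def)
    qed
    moreover have "f \<longlonglongrightarrow> y"
    proof -
      have "(\<lambda>n. y + inverse (real (Suc n)) *\<^sub>R (x0 - y)) \<longlonglongrightarrow> y + 0 *\<^sub>R (x0 - y)"
        by (intro tendsto_intros LIMSEQ_inverse_real_of_nat)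
      then show ?thesis by (simp add: f_def)
    qed
    ultimately show "y \<in> closure (Opn \<sigma>)" unfolding closure_sequential by blast
  qed
qed

definition ZZ :: "'n::finite set \<Rightarrow> (real^'n) set" where
  "ZZ A = {x. sum (\<lambda>k. x$k) UNIV = 0 \<and> (\<forall>a\<in>A. x$a = 0)}"

lemma inter_img:
  assumes N: "CARD('n::finite) \<ge> 2"
  shows "(ambientA :: (real^'n) set) \<inter> \<Inter>((\<lambda>a. VV (- {a})) ` A) = ZZ A"
  using ambient_eq[OF N] by (auto simp: ZZ_def VV_def)

lemma inter_char:
  assumes N: "CARD('n::finite) \<ge> 2"
  shows "X \<in> arr_intersections (ambientA :: (real^'n) set) arrA \<longleftrightarrow> (\<exists>A. X = ZZ A)"
proof
  assume "X \<in> arr_intersections ambientA arrA"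
  then obtain S where S: "S \<subseteq> arrA" "X = ambientA \<inter> \<Inter>S" unfolding arr_intersections_def by blast
  define A where "A = {a. VV (- {a}) \<in> S}"
  have "S = (\<lambda>a. VV (- {a})) ` A"
  proof
    show "S \<subseteq> (\<lambda>a. VV (- {a})) ` A"
    proof
      fix Y assume Y: "Y \<in> S"
      have "Y \<in> range (\<lambda>a. VV (- {a}))" using S(1) Y unfolding arrA_eq[OF N] by (rule subsetD)
      then obtain a where a: "Y = VV (- {a})" by (rule rangeE)
      then have "a \<in> A" using Y by (simp add: A_def)
      then show "Y \<in> (\<lambda>a. VV (- {a})) ` A" using a by (rule rev_image_eqI)
    qed
    show "(\<lambda>a. VV (- {a})) ` A \<subseteq> S" by (auto simp: A_def)
  qed
  then have "X = ZZ A" using S(2) inter_img[OF N, of A] by simp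
  then show "\<exists>A. X = ZZ A" by blast
next
  assume "\<exists>A. X = ZZ A"
  then obtain A where A: "X = ZZ A" by blast
  have "(\<lambda>a. VV (- {a})) ` A \<subseteq> arrA" using arrA_eq[OF N] by auto
  moreover have "X \<noteq> {}" using A by (auto simp: ZZ_def intro!: exI[of _ 0])
  moreover have "X = ambientA \<inter> \<Inter>((\<lambda>a. VV (- {a})) ` A)" using inter_img[OF N, of A] A by simp
  ultimately show "X \<in> arr_intersections ambientA arrA"
    unfolding arr_intersections_def by blast
qed

lemma Ocl_ZZ: "Ocl \<sigma> \<inter> ZZ A = CC ({a. \<sigma> a} - A) ({a. \<not> \<sigma> a} - A)"
  by (auto simp: Ocl_def ZZ_def CC_def VV_def split: if_splits)

lemma faces_char:
  assumes N: "CARD('n::finite) \<ge> 2"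
  shows "G \<in> arr_faces (ambientA :: (real^'n) set) arrA \<longleftrightarrow> (\<exists>\<sigma> A. Opn \<sigma> \<noteq> {} \<and> G = Ocl \<sigma> \<inter> ZZ A)"
proof
  assume "G \<in> arr_faces ambientA arrA"
  then obtain R X where RX: "G = closure R \<inter> X" "R \<in> arr_regions ambientA arrA" "X \<in> arr_intersections ambientA arrA"
    unfolding arr_faces_def by blast
  obtain \<sigma> where s: "R = Opn \<sigma>" "Opn \<sigma> \<noteq> {}" using RX(2) regions_char[OF N] by blast
  obtain A where A: "X = ZZ A" using RX(3) inter_char[OF N] by blast
  have "G = Ocl \<sigma> \<inter> ZZ A" using RX(1) s A closure_Opn[OF s(2)] by simp
  then show "\<exists>\<sigma> A. Opn \<sigma> \<noteq> {} \<and> G = Ocl \<sigma> \<inter> ZZ A" using s(2) by blast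
next
  assume "\<exists>\<sigma> A. Opn \<sigma> \<noteq> {} \<and> G = Ocl \<sigma> \<inter> ZZ A"
  then obtain \<sigma> A where s: "Opn \<sigma> \<noteq> {}" "G = Ocl \<sigma> \<inter> ZZ A" by blast
  have R: "Opn \<sigma> \<in> arr_regions ambientA arrA" using regions_char[OF N] s(1) by blast
  have X: "ZZ A \<in> arr_intersections ambientA arrA" using inter_char[OF N] by blast
  have "0 \<in> G" using s(2) by (simp add: Ocl_def ZZ_def)
  moreover have "G = closure (Opn \<sigma>) \<inter> ZZ A" using s closure_Opn[OF s(1)] by simp
  ultimately show "G \<in> arr_faces ambientA arrA"
    unfolding arr_faces_def using R X by blast
qed

lemma CC_zero:
  fixes I J :: "'n::finite set"
  assumes "I = {} \<or> J = {}"
  shows "CC I J = {0 :: real^'n}"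
proof
  show "{0} \<subseteq> CC I J" by (simp add: CC_def VV_def)
  show "CC I J \<subseteq> {0}"
  proof
    fix x :: "real^'n" assume x: "x \<in> CC I J"
    have xV: "x \<in> VV (I \<union> J)" and xI: "\<forall>i\<in>I. 0 \<le> x$i" and xJ: "\<forall>j\<in>J. x$j \<le> 0"
      using x by (auto simp: CC_def)
    have z: "\<forall>k. k \<notin> I \<union> J \<longrightarrow> x$k = 0" using xV by (simp add: VV_def)
    have s: "sum (\<lambda>k. x$k) (I \<union> J) = 0" by (rule sumK[OF xV])
    have "x$k = 0" for k
    proof (cases "I = {}")
      case True
      then have "sum (\<lambda>k. - x$k) J = 0" using s by (simp add: sum_negf)
      then have "\<forall>j\<in>J. - x$j = 0" using xJ by (simp add: sum_nonneg_eq_0_iff)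
      then show ?thesis using z True by (cases "k \<in> J") auto
    next
      case False
      then have Je: "J = {}" using assms by simp
      then have "\<forall>i\<in>I. x$i = 0" using s xI by (simp add: sum_nonneg_eq_0_iff)
      then show ?thesis using z Je by (cases "k \<in> I") auto
    qed
    then show "x \<in> {0}" by (simp add: vec_eq_iff)
  qed
qed

lemma Opn_ne:
  fixes I :: "'n::finite set"
  assumes "I \<noteq> {}" "- I \<noteq> {}"
  shows "Opn (\<lambda>k. k \<in> I) \<noteq> {}"
proof -
  define p where "p = real (card I)"
  define q where "q = real (card (- I))"
  have "card I > 0" using assms(1) by (simp add: card_gt_0_iff)
  then have p: "p > 0" by (simp add: p_def)
  have "card (- I) > 0" using assms(2) by (simp add: card_gt_0_iff)
  then have q: "q > 0" by (simp add: q_def)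
  define x :: "real^'n" where "x = (\<chi> k. if k \<in> I then 1 / p else - 1 / q)"
  have "sum (\<lambda>k. x$k) UNIV = (\<Sum>k\<in>UNIV. if k \<in> I then 1 / p else - 1 / q)" by (simp add: x_def)
  also have "\<dots> = (\<Sum>k\<in>I. 1 / p) + (\<Sum>k\<in>- I. - 1 / q)"
    by (simp add: sum.If_cases Int_def Collect_neg_eq[symmetric] Compl_eq)
  also have "\<dots> = real (card I) * (1 / p) - real (card (- I)) * (1 / q)" by simp
  also have "\<dots> = 0" using p q unfolding p_def[symmetric] q_def[symmetric] by simp
  finally have "sum (\<lambda>k. x$k) UNIV = 0" .
  moreover have "\<forall>a. if a \<in> I then x$a > 0 else x$a < 0" using p q by (simp add: x_def)
  ultimately have "x \<in> Opn (\<lambda>k. k \<in> I)" by (simp add: Opn_def)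
  then show ?thesis by blast
qed

lemma target_char:
  assumes N: "CARD('n::finite) \<ge> 2"
  shows "arr_faces (ambientA :: (real^'n) set) arrA - {{0}}
       = {CC I J | I J. I \<inter> J = {} \<and> I \<noteq> {} \<and> J \<noteq> {}}"
proof
  show "arr_faces (ambientA :: (real^'n) set) arrA - {{0}} \<subseteq> {CC I J | I J. I \<inter> J = {} \<and> I \<noteq> {} \<and> J \<noteq> {}}"
  proof
    fix G assume G: "G \<in> arr_faces (ambientA :: (real^'n) set) arrA - {{0}}"
    then obtain \<sigma> A where s: "G = Ocl \<sigma> \<inter> ZZ A" using faces_char[OF N] by blast
    define I where "I = {a. \<sigma> a} - A"
    define J where "J = {a. \<not> \<sigma> a} - A"
    have GC: "G = CC I J" using s Ocl_ZZ by (simp add: I_def J_def)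
    have "\<not> (I = {} \<or> J = {})" using CC_zero[of I J] GC G by auto
    moreover have "I \<inter> J = {}" by (auto simp: I_def J_def)
    ultimately show "G \<in> {CC I J | I J. I \<inter> J = {} \<and> I \<noteq> {} \<and> J \<noteq> {}}" using GC by blast
  qed
next
  show "{CC I J | I J. I \<inter> J = {} \<and> I \<noteq> {} \<and> J \<noteq> {}} \<subseteq> arr_faces (ambientA :: (real^'n) set) arrA - {{0}}"
  proof
    fix G assume "G \<in> {CC I J | I J. I \<inter> J = {} \<and> I \<noteq> {} \<and> (J :: 'n set) \<noteq> {}}"
    then obtain I J :: "'n set" where IJ: "G = CC I J" "I \<inter> J = {}" "I \<noteq> {}" "J \<noteq> {}" by blast
    define A where "A = - (I \<union> J)"
    have "- I \<noteq> {}" using IJ by auto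
    then have ne: "Opn (\<lambda>k. k \<in> I) \<noteq> {}" using Opn_ne IJ(3) by blast
    have "Ocl (\<lambda>k. k \<in> I) \<inter> ZZ A = CC ({a. a \<in> I} - A) ({a. a \<notin> I} - A)" by (rule Ocl_ZZ)
    also have "\<dots> = CC I J"
    proof -
      have "{a. a \<in> I} - A = I" "{a. a \<notin> I} - A = J" using IJ(2) by (auto simp: A_def)
      then show ?thesis by simp
    qed
    finally have "G \<in> arr_faces ambientA arrA" using faces_char[OF N] ne IJ(1) by blast
    moreover have "G \<noteq> {0}"
    proof
      assume "G = {0}"
      obtain i j where ij: "i \<in> I" "j \<in> J" using IJ by blast
      have "rt i j \<in> G" using RS_CC[OF IJ(2)] ij IJ(1) by (auto simp: RS_def)
      moreover have "rt i j $ i = 1" using ij IJ(2) by (auto simp: rt_comp)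
      ultimately show False using \<open>G = {0}\<close> by auto
    qed
    ultimately show "G \<in> arr_faces ambientA arrA - {{0}}" by blast
  qed
qed

lemma CC_inj:
  fixes I J I' J' :: "'n::finite set"
  assumes "I \<inter> J = {}" "I \<noteq> {}" "J \<noteq> {}" "I' \<inter> J' = {}" "I' \<noteq> {}" "J' \<noteq> {}"
    and eq: "CC I J = CC I' J'"
  shows "I = I' \<and> J = J'"
proof -
  have pos: "I = {k. \<exists>x\<in>CC I J. x$k > 0}" and neg: "J = {k. \<exists>x\<in>CC I J. x$k < 0}"
    if h: "I \<inter> J = {}" "I \<noteq> {}" "J \<noteq> {}" for I J :: "'n set"
  proof -
    obtain i0 j0 where ij: "i0 \<in> I" "j0 \<in> J" using h by blast
    show "I = {k. \<exists>x\<in>CC I J. x$k > 0}"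
    proof
      show "I \<subseteq> {k. \<exists>x\<in>CC I J. x$k > 0}"
      proof
        fix k assume k: "k \<in> I"
        have "rt k j0 \<in> CC I J" using RS_CC[OF h(1)] k ij by (auto simp: RS_def)
        moreover have "rt k j0 $ k = 1" using k ij h(1) by (auto simp: rt_comp)
        ultimately show "k \<in> {k. \<exists>x\<in>CC I J. x$k > 0}" by force
      qed
      show "{k. \<exists>x\<in>CC I J. x$k > 0} \<subseteq> I"
      proof
        fix k assume "k \<in> {k. \<exists>x\<in>CC I J. x$k > 0}"
        then obtain x where x: "x \<in> CC I J" "x$k > 0" by blast
        show "k \<in> I"
        proof (rule ccontr)
          assume "k \<notin> I"
          then have "x$k \<le> 0" using x(1) by (cases "k \<in> J") (auto simp: CC_def VV_def)
          then show False using x(2) by simp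
        qed
      qed
    qed
    show "J = {k. \<exists>x\<in>CC I J. x$k < 0}"
    proof
      show "J \<subseteq> {k. \<exists>x\<in>CC I J. x$k < 0}"
      proof
        fix k assume k: "k \<in> J"
        have "rt i0 k \<in> CC I J" using RS_CC[OF h(1)] k ij by (auto simp: RS_def)
        moreover have "rt i0 k $ k = -1" using k ij h(1) by (auto simp: rt_comp)
        ultimately show "k \<in> {k. \<exists>x\<in>CC I J. x$k < 0}" by force
      qed
      show "{k. \<exists>x\<in>CC I J. x$k < 0} \<subseteq> J"
      proof
        fix k assume "k \<in> {k. \<exists>x\<in>CC I J. x$k < 0}"
        then obtain x where x: "x \<in> CC I J" "x$k < 0" by blast
        show "k \<in> J"
        proof (rule ccontr)
          assume "k \<notin> J"
          then have "x$k \<ge> 0" using x(1) by (cases "k \<in> I") (auto simp: CC_def VV_def)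
          then show False using x(2) by simp
        qed
      qed
    qed
  qed
  show ?thesis using pos[OF assms(1-3)] pos[OF assms(4-6)] neg[OF assms(1-3)] neg[OF assms(4-6)] eq
    by simp
qed

theorem corollary4p2:
  assumes "CARD('n::finite) \<ge> 2"
  shows "bij_betw cone_over
           {F. F face_of (polytopeA :: (real^'n) set) \<and> F \<noteq> {} \<and> F \<noteq> polytopeA}
           (arr_faces (ambientA :: (real^'n) set) arrA - {{0}})
       \<and> (\<forall>F. F face_of (polytopeA :: (real^'n) set) \<and> F \<noteq> {} \<and> F \<noteq> polytopeA
              \<longrightarrow> aff_dim (cone_over F) = aff_dim F + 1)"
proof (intro conjI allI impI)
  let ?Fs = "{F. F face_of (polytopeA :: (real^'n) set) \<and> F \<noteq> {} \<and> F \<noteq> polytopeA}"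
  show "bij_betw cone_over ?Fs (arr_faces (ambientA :: (real^'n) set) arrA - {{0}})"
    unfolding bij_betw_def
  proof
    show "inj_on cone_over ?Fs"
    proof (rule inj_onI)
      fix F1 F2 assume F1: "F1 \<in> ?Fs" and F2: "F2 \<in> ?Fs" and eq: "cone_over F1 = cone_over F2"
      obtain I1 J1 where 1: "I1 \<inter> J1 = {}" "I1 \<noteq> {}" "J1 \<noteq> {}" "F1 = convex hull RS I1 J1"
        using face_char[of F1] F1 by blast
      obtain I2 J2 where 2: "I2 \<inter> J2 = {}" "I2 \<noteq> {}" "J2 \<noteq> {}" "F2 = convex hull RS I2 J2"
        using face_char[of F2] F2 by blast
      have "CC I1 J1 = CC I2 J2" using eq 1 2 cone_FF[OF 1(1-3)] cone_FF[OF 2(1-3)] by simp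
      then have "I1 = I2 \<and> J1 = J2" using CC_inj[OF 1(1-3) 2(1-3)] by blast
      then show "F1 = F2" using 1 2 by simp
    qed
  next
    show "cone_over ` ?Fs = arr_faces (ambientA :: (real^'n) set) arrA - {{0}}"
      unfolding target_char[OF assms]
    proof
      show "cone_over ` ?Fs \<subseteq> {CC I J | I J. I \<inter> J = {} \<and> I \<noteq> {} \<and> J \<noteq> {}}"
      proof
        fix G assume "G \<in> cone_over ` ?Fs"
        then obtain F where F: "F \<in> ?Fs" "G = cone_over F" by blast
        obtain I J where IJ: "I \<inter> J = {}" "I \<noteq> {}" "J \<noteq> {}" "F = convex hull RS I J"
          using face_char[of F] F by blast
        then have "G = CC I J" using F(2) cone_FF[OF IJ(1-3)] by simp
        then show "G \<in> {CC I J | I J. I \<inter> J = {} \<and> I \<noteq> {} \<and> J \<noteq> {}}" using IJ by blast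
      qed
      show "{CC I J | I J. I \<inter> J = {} \<and> I \<noteq> {} \<and> J \<noteq> {}} \<subseteq> cone_over ` ?Fs"
      proof
        fix G assume "G \<in> {CC I J | I J. I \<inter> J = {} \<and> I \<noteq> {} \<and> (J :: 'n set) \<noteq> {}}"
        then obtain I J :: "'n set" where IJ: "G = CC I J" "I \<inter> J = {}" "I \<noteq> {}" "J \<noteq> {}" by blast
        have "convex hull RS I J \<in> ?Fs" using face_FF[OF IJ(2-4)] by simp
        moreover have "G = cone_over (convex hull RS I J)" using cone_FF[OF IJ(2-4)] IJ(1) by simp
        ultimately show "G \<in> cone_over ` ?Fs" by blast
      qed
    qed
  qed
next
  fix F :: "(real^'n) set"
  assume F: "F face_of polytopeA \<and> F \<noteq> {} \<and> F \<noteq> polytopeA"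
  then obtain I J where IJ: "I \<inter> J = {}" "I \<noteq> {}" "J \<noteq> {}" "F = convex hull RS I J"
    using face_char[of F] by blast
  show "aff_dim (cone_over F) = aff_dim F + 1"
    using IJ cone_FF[OF IJ(1-3)] aff_dim_CC[OF IJ(1-3)] aff_dim_FF[OF IJ(1-3)] by simp
qed

end
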